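(* Let $G$ be an $e_1$-gate graph and let $\mathcal F$ be the ground space (the $e_1$-eigenspace) of $A(G)$. Let $\mathcal F_\pm=\{|\alpha\rangle|\pm\rangle:|\alpha\rangle\in\mathcal F\}$, where $|\pm\rangle=\frac1{\sqrt2}(|0\rangle\pm|1\rangle)$. Then the smallest eigenvalue of $A(G^{\rm SL})$ is $e_1$, its eigenspace (the ground space of $A(G^{\rm SL})$) is exactly $\mathcal F_-$, and for every unit vector $|v\rangle\in\mathcal F_+$ we have $\langle v|\,2\,\Pi_{\mathcal N}\otimes\Pi_+\,|v\rangle\ge \frac14$.
   Context: Let $g_0$ be a fixed $128$-vertex simple graph with vertices labeled $(z,t,j)$, $z\in\{0,1\}$, $t\in[8]$, $j\in\{0,\dots,7\}$, whose adjacency matrix $A(g_0)$ has smallest eigenvalue $e_1=-1-3\sqrt2$, with the corresponding eigenspace having orthonormal basis $|\psi_{z,0}\rangle=\frac{1}{\sqrt8}\big(|z\rangle(|1\rangle+|3\rangle+|5\rangle+|7\rangle)+H|z\rangle(|2\rangle+|8\rangle)+HT|z\rangle(|4\rangle+|6\rangle)\big)|\omega\rangle$ and $|\psi_{z,1}\rangle=|\psi_{z,0}\rangle^*$, where $H=\frac1{\sqrt2}\begin{pmatrix}1&1\\1&-1\end{pmatrix}$, $T=\mathrm{diag}(1,e^{i\pi/4})$, $|\omega\rangle=\frac1{\sqrt8}\sum_{j=0}^7 e^{-i\pi j/4}|j\rangle$. A gate diagram consists of $R$ diagram elements $q\in[R]$, each with a label $U_q\in\{1,H,HT\}$ and node set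 $\{(q,z,t): z\in\{0,1\},\ t\in\{1,3\}\cup T(U_q)\}$, where $T(H)=\{2,8\}$, $T(HT)=\{4,6\}$, $T(1)=\{5,7\}$; together with a set $\mathcal S$ of nodes and a set $\mathcal E$ of unordered pairs of nodes, such that each node belongs to at most one element of $\mathcal S$ or pair of $\mathcal E$. The associated gate graph $G$ has vertices $(q,z,t,j)$, $q\in[R]$, $z\in\{0,1\}$, $t\in[8]$, $j\in\{0,\dots,7\}$, and adjacency matrix $A(G)=1_q\otimes A(g_0)+h_{\mathcal S}+h_{\mathcal E}$, with $h_{\mathcal S}=\sum_{(q,z,t)\in\mathcal S}|q,z,t\rangle\langle q,z,t|\otimes 1_j$ and $h_{\mathcal E}=\sum_{\{(q,z,t),(q',z',t')\}\in\mathcal E}(|q,z,t\rangle+|q',z',t'\rangle)(\langle q,z,t|+\langle q',z',t'|)\otimes 1_j$. $G$ is an $e_1$-gate graph if the smallest eigenvalue of $A(G)$ equals $e_1$. Let $\mathcal N=\{(q,z,t,j): (q,z,t)\notin\mathcal S \text{ and } (q,z,t) \text{ belongs to no pair in } \mathcal E\}$, $\Pi_{\mathcal N}=\sum_{v\in\mathcal N}|v\rangle\langle v|$, and $\Pi_+=|+\rangle\langle+|$ on $\mathbb C^2=\mathrm{span}\{|0\rangle,|1\rangle\}$. The graph $G^{\rm SL}$ has vertex set $V(G)\times\{0,1\}$ (vertices $(q,z,t,j,d)$) and adjacency matrix $A(G^{\rm SL})=A(G)\otimes 1_d+2\,\Pi_{\mathcal N}\otimes\Pi_+$. *)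

theory Defs
  imports Complex_Main
begin

text \<open>A matrix on a finite index set V is a function 'v => 'v => complex (only entries
  with both indices in V matter); a vector is a function 'v => complex vanishing outside V.\<close>

definition mvec :: "'v set \<Rightarrow> ('v \<Rightarrow> 'v \<Rightarrow> complex) \<Rightarrow> ('v \<Rightarrow> complex) \<Rightarrow> 'v \<Rightarrow> complex" where
  "mvec V M v = (\<lambda>x. \<Sum>y\<in>V. M x y * v y)"

definition supported :: "'v set \<Rightarrow> ('v \<Rightarrow> complex) \<Rightarrow> bool" where
  "supported V v \<longleftrightarrow> (\<forall>x. x \<notin> V \<longrightarrow> v x = 0)"

definition eigenspace :: "'v set \<Rightarrow> ('v \<Rightarrow> 'v \<Rightarrow> complex) \<Rightarrow> real \<Rightarrow> ('v \<Rightarrow> complex) set" where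
  "eigenspace V M e = {v. supported V v \<and> (\<forall>x\<in>V. mvec V M v x = complex_of_real e * v x)}"

definition has_eigenvalue :: "'v set \<Rightarrow> ('v \<Rightarrow> 'v \<Rightarrow> complex) \<Rightarrow> real \<Rightarrow> bool" where
  "has_eigenvalue V M e \<longleftrightarrow> (\<exists>v\<in>eigenspace V M e. \<exists>x\<in>V. v x \<noteq> 0)"

text \<open>Smallest eigenvalue (all matrices considered are real symmetric, so the spectrum is real).\<close>
definition min_eigenvalue :: "'v set \<Rightarrow> ('v \<Rightarrow> 'v \<Rightarrow> complex) \<Rightarrow> real \<Rightarrow> bool" where
  "min_eigenvalue V M e \<longleftrightarrow> has_eigenvalue V M e \<and> (\<forall>\<mu>. has_eigenvalue V M \<mu> \<longrightarrow> e \<le> \<mu>)"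

definition cinner :: "'v set \<Rightarrow> ('v \<Rightarrow> complex) \<Rightarrow> ('v \<Rightarrow> complex) \<Rightarrow> complex" where
  "cinner V u w = (\<Sum>x\<in>V. cnj (u x) * w x)"

definition qform :: "'v set \<Rightarrow> ('v \<Rightarrow> 'v \<Rightarrow> complex) \<Rightarrow> ('v \<Rightarrow> complex) \<Rightarrow> complex" where
  "qform V M v = cinner V v (mvec V M v)"

definition e1 :: real where "e1 = -1 - 3 * sqrt 2"

definition V0 :: "(nat \<times> nat \<times> nat) set" where
  "V0 = {(z,t,j). z < 2 \<and> 1 \<le> t \<and> t \<le> 8 \<and> j < 8}"

definition Hm :: "nat \<Rightarrow> nat \<Rightarrow> complex" where
  "Hm a b = (if a = 1 \<and> b = 1 then -1 else 1) / complex_of_real (sqrt 2)"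

definition Tm :: "nat \<Rightarrow> complex" where
  "Tm b = (if b = 1 then cis (pi / 4) else 1)"

text \<open>Entry (a,b) of the single-qubit operator attached to position t in psi_{z,0}:
  1 for t odd, H for t in {2,8}, HT for t in {4,6}.\<close>
definition gate_at :: "nat \<Rightarrow> nat \<Rightarrow> nat \<Rightarrow> complex" where
  "gate_at t a b =
     (if t \<in> {1,3,5,7} then (if a = b then 1 else 0)
      else if t \<in> {2,8} then Hm a b
      else Hm a b * Tm b)"

definition omega :: "nat \<Rightarrow> complex" where
  "omega j = cis (- pi * real j / 4) / complex_of_real (sqrt 8)"

definition psi :: "nat \<Rightarrow> nat \<Rightarrow> (nat \<times> nat \<times> nat) \<Rightarrow> complex" where
  "psi z c = (\<lambda>(z',t,j). if (z',t,j) \<in> V0 then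
      (let w = gate_at t z' z * omega j / complex_of_real (sqrt 8) in if c = 0 then w else cnj w)
      else 0)"

definition is_g0 :: "((nat \<times> nat \<times> nat) \<Rightarrow> (nat \<times> nat \<times> nat) \<Rightarrow> complex) \<Rightarrow> bool" where
  "is_g0 A0 \<longleftrightarrow>
     (\<forall>x\<in>V0. \<forall>y\<in>V0. (A0 x y = 0 \<or> A0 x y = 1) \<and> A0 x y = A0 y x) \<and>
     (\<forall>x\<in>V0. A0 x x = 0) \<and>
     min_eigenvalue V0 A0 e1 \<and>
     eigenspace V0 A0 e1 =
       {(\<lambda>x. \<Sum>(z,c)\<in>{0..<2}\<times>{0..<2}. k (z,c) * psi z c x) | k. True}"

datatype glabel = Id1 | Had | HadT

definition Tset :: "glabel \<Rightarrow> nat set" where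
  "Tset U = (case U of Had \<Rightarrow> {2,8} | HadT \<Rightarrow> {4,6} | Id1 \<Rightarrow> {5,7})"

definition nodes :: "nat \<Rightarrow> (nat \<Rightarrow> glabel) \<Rightarrow> (nat \<times> nat \<times> nat) set" where
  "nodes R U = {(q,z,t). 1 \<le> q \<and> q \<le> R \<and> z < 2 \<and> t \<in> {1,3} \<union> Tset (U q)}"

definition gate_diagram :: "nat \<Rightarrow> (nat \<Rightarrow> glabel) \<Rightarrow> (nat \<times> nat \<times> nat) set
      \<Rightarrow> (nat \<times> nat \<times> nat) set set \<Rightarrow> bool" where
  "gate_diagram R U S E \<longleftrightarrow>
     S \<subseteq> nodes R U \<and>
     (\<forall>e\<in>E. e \<subseteq> nodes R U \<and> card e = 2) \<and>
     (\<forall>n\<in>S. \<forall>e\<in>E. n \<notin> e) \<and>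
     (\<forall>e\<in>E. \<forall>e'\<in>E. e \<noteq> e' \<longrightarrow> e \<inter> e' = {})"

type_synonym vert = "nat \<times> nat \<times> nat \<times> nat"

definition VG :: "nat \<Rightarrow> vert set" where
  "VG R = {(q,z,t,j). 1 \<le> q \<and> q \<le> R \<and> (z,t,j) \<in> V0}"

definition node_of :: "vert \<Rightarrow> nat \<times> nat \<times> nat" where
  "node_of x = (case x of (q,z,t,j) \<Rightarrow> (q,z,t))"

definition jof :: "vert \<Rightarrow> nat" where
  "jof x = (case x of (q,z,t,j) \<Rightarrow> j)"

text \<open>A(G) = 1_q (x) A(g_0) + h_S + h_E.\<close>
definition AG :: "((nat \<times> nat \<times> nat) \<Rightarrow> (nat \<times> nat \<times> nat) \<Rightarrow> complex)
     \<Rightarrow> (nat \<times> nat \<times> nat) set \<Rightarrow> (nat \<times> nat \<times> nat) set set \<Rightarrow> vert \<Rightarrow> vert \<Rightarrow> complex" where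
  "AG A0 S E = (\<lambda>(q,z,t,j) (q',z',t',j').
      (if q = q' then A0 (z,t,j) (z',t',j') else 0)
    + (if (q,z,t) = (q',z',t') \<and> (q,z,t) \<in> S \<and> j = j' then 1 else 0)
    + (\<Sum>e\<in>E. if (q,z,t) \<in> e \<and> (q',z',t') \<in> e \<and> j = j' then 1 else 0))"

definition Nset :: "nat \<Rightarrow> (nat \<times> nat \<times> nat) set \<Rightarrow> (nat \<times> nat \<times> nat) set set \<Rightarrow> vert set" where
  "Nset R S E = {x\<in>VG R. node_of x \<notin> S \<and> (\<forall>e\<in>E. node_of x \<notin> e)}"

definition VSL :: "nat \<Rightarrow> (vert \<times> nat) set" where
  "VSL R = VG R \<times> {0,1}"

definition Piplus :: "nat \<Rightarrow> nat \<Rightarrow> complex" where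
  "Piplus d d' = 1/2"

definition penalty :: "nat \<Rightarrow> (nat \<times> nat \<times> nat) set \<Rightarrow> (nat \<times> nat \<times> nat) set set
     \<Rightarrow> vert \<times> nat \<Rightarrow> vert \<times> nat \<Rightarrow> complex" where
  "penalty R S E = (\<lambda>(x,d) (y,d'). 2 * (if x = y \<and> x \<in> Nset R S E then 1 else 0) * Piplus d d')"

definition ASL :: "((nat \<times> nat \<times> nat) \<Rightarrow> (nat \<times> nat \<times> nat) \<Rightarrow> complex) \<Rightarrow> nat
     \<Rightarrow> (nat \<times> nat \<times> nat) set \<Rightarrow> (nat \<times> nat \<times> nat) set set \<Rightarrow> vert \<times> nat \<Rightarrow> vert \<times> nat \<Rightarrow> complex" where
  "ASL A0 R S E = (\<lambda>(x,d) (y,d').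
      AG A0 S E x y * (if d = d' then 1 else 0) + penalty R S E (x,d) (y,d'))"

text \<open>|alpha>|+> (s = 1) and |alpha>|-> (s = -1).\<close>
definition tensor_pm :: "complex \<Rightarrow> (vert \<Rightarrow> complex) \<Rightarrow> vert \<times> nat \<Rightarrow> complex" where
  "tensor_pm s \<alpha> = (\<lambda>(x,d). \<alpha> x *
      (if d = 0 then 1 / complex_of_real (sqrt 2) else if d = 1 then s / complex_of_real (sqrt 2) else 0))"

end

theory Submission
  imports Defs "HOL-Analysis.Analysis"
begin

definition nrm :: "'v set \<Rightarrow> ('v \<Rightarrow> complex) \<Rightarrow> real" where
  "nrm V v = (\<Sum>x\<in>V. (cmod (v x))^2)"

definition herm :: "'v set \<Rightarrow> ('v \<Rightarrow> 'v \<Rightarrow> complex) \<Rightarrow> bool" where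
  "herm V M \<longleftrightarrow> (\<forall>x\<in>V. \<forall>y\<in>V. M y x = cnj (M x y))"

lemma min_attained:
  fixes V :: "'v set" and M :: "'v \<Rightarrow> 'v \<Rightarrow> complex"
  assumes fin: "finite V" and ne: "V \<noteq> {}"
  shows "\<exists>v0. supported V v0 \<and> nrm V v0 = 1 \<and>
     (\<forall>u. supported V u \<and> nrm V u = 1 \<longrightarrow> Re (qform V M v0) \<le> Re (qform V M u))"
proof -
  define B where "B = (\<lambda>x::'v. if x \<in> V then cball (0::complex) 1 else {0})"
  define K where "K = PiE UNIV B"
  have "compactin (product_topology (\<lambda>i. euclidean) UNIV) K"
    unfolding K_def compactin_PiE B_def by auto
  hence cK: "compact K" by (simp add: euclidean_product_topology)
  have cn: "continuous_on UNIV (\<lambda>v::'v\<Rightarrow>complex. nrm V v)"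
    unfolding nrm_def by (intro continuous_intros) auto
  have "closed {v::'v\<Rightarrow>complex. nrm V v = 1}"
    by (rule closed_Collect_eq[OF cn]) auto
  hence cS: "compact (K \<inter> {v. nrm V v = 1})" using cK by auto
  obtain x0 where x0: "x0 \<in> V" using ne by auto
  define e0 where "e0 = (\<lambda>x::'v. if x = x0 then (1::complex) else 0)"
  have "nrm V e0 = (\<Sum>x\<in>V. if x = x0 then 1 else 0)"
    unfolding nrm_def by (rule sum.cong) (auto simp: e0_def)
  also have "\<dots> = 1" using x0 fin by simp
  finally have "e0 \<in> K \<inter> {v. nrm V v = 1}"
    unfolding K_def B_def e0_def using x0 by (auto simp: PiE_iff)
  hence neS: "K \<inter> {v. nrm V v = 1} \<noteq> {}" by auto
  have cq: "continuous_on (K \<inter> {v. nrm V v = 1}) (\<lambda>v. Re (qform V M v))"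
    unfolding qform_def cinner_def mvec_def
    by (intro continuous_intros) (auto intro: continuous_on_subset[OF continuous_on_product_coordinates])
  from continuous_attains_inf[OF cS neS cq] obtain v0 where
    v0: "v0 \<in> K \<inter> {v. nrm V v = 1}" and mn: "\<forall>y\<in>K \<inter> {v. nrm V v = 1}. Re (qform V M v0) \<le> Re (qform V M y)"
    by blast
  have sK: "u \<in> K" if "supported V u" "nrm V u = 1" for u
  proof -
    have "cmod (u x) \<le> 1" if "x \<in> V" for x
    proof -
      have "(cmod (u x))^2 \<le> nrm V u" unfolding nrm_def
        by (rule member_le_sum) (use that fin in auto)
      hence "(cmod (u x))^2 \<le> 1^2" using \<open>nrm V u = 1\<close> by simp
      thus ?thesis by (rule power2_le_imp_le) auto
    qed
    thus ?thesis using that(1) unfolding K_def B_def supported_def by (auto simp: PiE_iff)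
  qed
  have "supported V v0" unfolding supported_def
  proof (intro allI impI)
    fix x assume "x \<notin> V"
    have "v0 x \<in> B x" using v0 unfolding K_def by (auto simp: PiE_iff)
    thus "v0 x = 0" using \<open>x \<notin> V\<close> unfolding B_def by simp
  qed
  thus ?thesis using v0 mn sK by blast
qed

definition sform :: "'v set \<Rightarrow> ('v \<Rightarrow> 'v \<Rightarrow> complex) \<Rightarrow> ('v \<Rightarrow> complex) \<Rightarrow> ('v \<Rightarrow> complex) \<Rightarrow> complex" where
  "sform V P u w = cinner V u (mvec V P w)"

lemma qform_sform: "qform V P v = sform V P v v"
  unfolding qform_def sform_def ..

lemma sform_herm:
  assumes h: "herm V P"
  shows "sform V P u w = cnj (sform V P w u)"
proof -
  have "sform V P u w = (\<Sum>x\<in>V. \<Sum>y\<in>V. cnj (u x) * P x y * w y)"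
    unfolding sform_def cinner_def mvec_def by (simp add: sum_distrib_left mult.assoc)
  also have "\<dots> = (\<Sum>y\<in>V. \<Sum>x\<in>V. cnj (u x) * P x y * w y)" by (rule sum.swap)
  also have "\<dots> = (\<Sum>y\<in>V. \<Sum>x\<in>V. cnj (cnj (w y) * P y x * u x))"
  proof (intro sum.cong refl)
    fix x y assume "x \<in> V" "y \<in> V"
    hence e: "P x y = cnj (P y x)" using h unfolding herm_def by blast
    show "cnj (u x) * P x y * w y = cnj (cnj (w y) * P y x * u x)"
      unfolding e by (simp add: ac_simps)
  qed
  also have "\<dots> = cnj (sform V P w u)"
    unfolding sform_def cinner_def mvec_def by (simp add: sum_distrib_left mult.assoc)
  finally show ?thesis .
qed

lemma qform_add:
  "qform V P (\<lambda>x. v x + c * w x) = qform V P v + c * sform V P v w + cnj c * sform V P w v + cnj c * c * qform V P w"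
proof -
  have inner: "(\<Sum>y\<in>V. P x y * (v y + c * w y)) = (\<Sum>y\<in>V. P x y * v y) + c * (\<Sum>y\<in>V. P x y * w y)" for x
    by (simp add: distrib_left sum.distrib sum_distrib_left ac_simps)
  have "qform V P (\<lambda>x. v x + c * w x) = (\<Sum>x\<in>V. cnj (v x) * (\<Sum>y\<in>V. P x y * v y) + c * (cnj (v x) * (\<Sum>y\<in>V. P x y * w y))
     + cnj c * (cnj (w x) * (\<Sum>y\<in>V. P x y * v y)) + cnj c * c * (cnj (w x) * (\<Sum>y\<in>V. P x y * w y)))"
    unfolding qform_def cinner_def mvec_def inner by (rule sum.cong) (simp_all add: algebra_simps)
  also have "\<dots> = qform V P v + c * sform V P v w + cnj c * sform V P w v + cnj c * c * qform V P w"
    unfolding qform_def sform_def cinner_def mvec_def by (simp add: sum.distrib sum_distrib_left)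
  finally show ?thesis .
qed

lemma cinner_self: "cinner V v v = of_real (nrm V v)"
proof -
  have "cinner V v v = (\<Sum>x\<in>V. of_real ((cmod (v x))^2))"
    unfolding cinner_def by (rule sum.cong) (auto simp only: complex_norm_square mult.commute)
  thus ?thesis unfolding nrm_def by simp
qed

lemma nrm_nonneg: "0 \<le> nrm V v"
  unfolding nrm_def by (simp add: sum_nonneg)

lemma nrm_zero:
  assumes "finite V" "nrm V v = 0" "x \<in> V" shows "v x = 0"
proof -
  have "\<forall>x\<in>V. (cmod (v x))^2 = 0" using assms(1,2) unfolding nrm_def
    by (subst sum_nonneg_eq_0_iff[symmetric]) auto
  thus ?thesis using assms(3) by simp
qed

lemma quad_nonneg_lin:
  fixes a b :: real
  assumes "\<forall>t. 0 \<le> 2 * t * a + t^2 * b" "0 \<le> a"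
  shows "a = 0"
proof (rule ccontr)
  assume "a \<noteq> 0" hence a: "a > 0" using assms(2) by simp
  show False
  proof (cases "b \<le> 0")
    case True
    have "0 \<le> 2 * (-1) * a + (-1)^2 * b" using assms(1) by blast
    thus False using a True by simp
  next
    case False
    have "0 \<le> 2 * (-a/b) * a + (-a/b)^2 * b" using assms(1) by blast
    also have "\<dots> = - (a^2 / b)" using False by (simp add: power2_eq_square field_simps)
    finally have "a^2 / b \<le> 0" by simp
  moreover have "a^2 / b > 0" using a False by simp
  ultimately show False by simp
  qed
qed

lemma psd_zero:
  assumes fin: "finite V" and h: "herm V P"
    and psd: "\<And>u. supported V u \<Longrightarrow> 0 \<le> Re (qform V P u)"
    and sv: "supported V v" and z: "Re (qform V P v) = 0"
  shows "\<forall>x\<in>V. mvec V P v x = 0"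
proof -
  define w where "w = (\<lambda>x. if x \<in> V then mvec V P v x else 0)"
  define rr where "rr = nrm V (mvec V P v)"
  have r: "sform V P w v = of_real rr"
    unfolding rr_def cinner_self[symmetric] sform_def cinner_def w_def by (rule sum.cong) auto
  have r2: "sform V P v w = of_real rr" using sform_herm[OF h, of v w] r by simp
  have "\<forall>t. 0 \<le> 2 * t * rr + t^2 * Re (qform V P w)"
  proof
    fix t :: real
    have "supported V (\<lambda>x. v x + of_real t * w x)"
      using sv unfolding supported_def w_def by auto
    hence "0 \<le> Re (qform V P (\<lambda>x. v x + of_real t * w x))" by (rule psd)
    also have "\<dots> = 2 * t * rr + t^2 * Re (qform V P w)"
      unfolding qform_add r r2 using z by (simp add: power2_eq_square)
    finally show "0 \<le> 2 * t * rr + t^2 * Re (qform V P w)" .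
  qed
  hence "rr = 0" using quad_nonneg_lin nrm_nonneg unfolding rr_def by blast
  thus ?thesis using nrm_zero[OF fin] unfolding rr_def by blast
qed

lemma qform_scale: "qform V P (\<lambda>x. c * u x) = cnj c * c * qform V P u"
  unfolding qform_def cinner_def mvec_def
  by (simp add: sum_distrib_left ac_simps)

lemma nrm_scale: "nrm V (\<lambda>x. c * u x) = (cmod c)^2 * nrm V u"
  unfolding nrm_def by (simp add: sum_distrib_left norm_mult power_mult_distrib)

lemma qform_zero_vec:
  assumes "\<forall>x\<in>V. u x = 0" shows "qform V P u = 0"
  using assms unfolding qform_def cinner_def by simp

lemma mvec_shift:
  assumes "finite V" "x \<in> V"
  shows "mvec V (\<lambda>x y. M x y - (if x = y then c else 0)) v x = mvec V M v x - c * v x"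
proof -
  have "mvec V (\<lambda>x y. M x y - (if x = y then c else 0)) v x = (\<Sum>y\<in>V. M x y * v y) - (\<Sum>y\<in>V. (if x = y then c * v y else 0))"
  proof -
    have "\<And>y. (M x y - (if x = y then c else 0)) * v y = M x y * v y - (if x = y then c * v y else 0)"
      by (auto simp: left_diff_distrib)
    thus ?thesis unfolding mvec_def by (simp add: sum_subtractf)
  qed
  also have "\<dots> = mvec V M v x - c * v x" using assms unfolding mvec_def by simp
  finally show ?thesis .
qed

lemma qform_shift:
  assumes "finite V"
  shows "qform V (\<lambda>x y. M x y - (if x = y then c else 0)) v = qform V M v - c * cinner V v v"
proof -
  have "qform V (\<lambda>x y. M x y - (if x = y then c else 0)) v = (\<Sum>x\<in>V. cnj (v x) * (mvec V M v x - c * v x))"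
    unfolding qform_def cinner_def using mvec_shift[OF assms] by (intro sum.cong) auto
  thus ?thesis unfolding qform_def cinner_def by (simp add: right_diff_distrib sum_subtractf sum_distrib_left ac_simps)
qed

lemma var_principle:
  assumes fin: "finite V" and h: "herm V M" and ev: "\<And>\<mu>. has_eigenvalue V M \<mu> \<Longrightarrow> e \<le> \<mu>"
    and su: "supported V u"
  shows "e * nrm V u \<le> Re (qform V M u)"
proof (cases "V = {}")
  case True thus ?thesis unfolding nrm_def qform_def cinner_def by simp
next
  case False
  obtain v0 where sv0: "supported V v0" and n0: "nrm V v0 = 1"
    and mn: "\<And>u. supported V u \<Longrightarrow> nrm V u = 1 \<Longrightarrow> Re (qform V M v0) \<le> Re (qform V M u)"
    using min_attained[OF fin False, of M] by blast
  define m where "m = Re (qform V M v0)"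
  have ma: "m * nrm V w \<le> Re (qform V M w)" if sw: "supported V w" for w
  proof (cases "nrm V w = 0")
    case True
    hence "\<forall>x\<in>V. w x = 0" using nrm_zero[OF fin] by blast
    thus ?thesis using True qform_zero_vec[of V w M] by simp
  next
    case False
    hence pos: "nrm V w > 0" using nrm_nonneg[of V w] by simp
    define s where "s = sqrt (nrm V w)"
    have s: "s > 0" "s^2 = nrm V w" using pos unfolding s_def by auto
    define w' where "w' = (\<lambda>x. complex_of_real (1/s) * w x)"
    have "supported V w'" using sw unfolding supported_def w'_def by auto
    moreover have "nrm V w' = 1" unfolding w'_def nrm_scale using s pos
      by (simp add: power_divide norm_divide)
    ultimately have "m \<le> Re (qform V M w')" using mn unfolding m_def by blast
    also have "\<dots> = Re (qform V M w) / s^2" unfolding w'_def qform_scale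
      by (simp add: power2_eq_square)
    finally have "m \<le> Re (qform V M w) / s^2" .
    hence "m \<le> Re (qform V M w) / nrm V w" unfolding s(2) .
    thus ?thesis by (subst (asm) pos_le_divide_eq[OF pos])
  qed
  define P where "P = (\<lambda>x y. M x y - (if x = y then complex_of_real m else 0))"
  have hP: "herm V P" unfolding herm_def
  proof (intro ballI)
    fix x y assume xy: "x \<in> V" "y \<in> V"
    hence "M y x = cnj (M x y)" using h unfolding herm_def by blast
    thus "P y x = cnj (P x y)" unfolding P_def by simp
  qed
  have psd: "0 \<le> Re (qform V P w)" if "supported V w" for w
    using ma[OF that] unfolding P_def qform_shift[OF fin] cinner_self by simp
  have z: "Re (qform V P v0) = 0"
    unfolding P_def qform_shift[OF fin] cinner_self n0 m_def by simp
  have "\<forall>x\<in>V. mvec V P v0 x = 0" by (rule psd_zero[OF fin hP psd sv0 z])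
  hence "\<forall>x\<in>V. mvec V M v0 x = complex_of_real m * v0 x"
    unfolding P_def using mvec_shift[OF fin] by simp
  hence "v0 \<in> eigenspace V M m" unfolding eigenspace_def using sv0 by simp
  moreover have "\<exists>x\<in>V. v0 x \<noteq> 0"
  proof (rule ccontr)
    assume "\<not> ?thesis"
    hence "nrm V v0 = 0" unfolding nrm_def by simp
    thus False using n0 by simp
  qed
  ultimately have "has_eigenvalue V M m" unfolding has_eigenvalue_def by blast
  hence "e \<le> m" by (rule ev)
  hence "e * nrm V u \<le> m * nrm V u" using nrm_nonneg[of V u] by (simp add: mult_right_mono)
  also have "\<dots> \<le> Re (qform V M u)" by (rule ma[OF su])
  finally show ?thesis .
qed


lemma sq2: "complex_of_real (sqrt 2) * complex_of_real (sqrt 2) = 2"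
  by (simp flip: of_real_mult)

lemma Hm_real: "cnj (Hm a b) = Hm a b"
  unfolding Hm_def by simp

lemma Tm_unit: "cnj (Tm b) * Tm b = 1"
  unfolding Tm_def by (simp add: cis_cnj cis_mult)

lemma sum2: "(\<Sum>z<(2::nat). f z) = f 0 + f 1"
  by (simp add: numeral_2_eq_2)

lemma gate_unitary:
  assumes z1: "z1 < 2" and z2: "z2 < 2"
  shows "(\<Sum>z'<2. cnj (gate_at t z' z1) * gate_at t z' z2) = (if z1 = z2 then 1 else 0)"
proof -
  have zz: "z1 \<in> {0,1}" "z2 \<in> {0,1}" using z1 z2 by auto
  have H: "(\<Sum>z'<2. cnj (Hm z' z1) * Hm z' z2) = (if z1 = z2 then 1 else 0)"
    using zz unfolding sum2 Hm_def
    by (auto simp: field_simps sq2)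
  show ?thesis
  proof (cases "t \<in> {1,3,5,7}")
    case True thus ?thesis unfolding gate_at_def sum2 using zz by auto
  next
    case f1: False
    show ?thesis
    proof (cases "t \<in> {2,8}")
      case True thus ?thesis using f1 H unfolding gate_at_def by simp
    next
      case False
      have "(\<Sum>z'<2. cnj (gate_at t z' z1) * gate_at t z' z2) = cnj (Tm z1) * Tm z2 * (\<Sum>z'<2. cnj (Hm z' z1) * Hm z' z2)"
        using f1 False unfolding gate_at_def by (simp add: sum_distrib_left ac_simps)
      also have "\<dots> = (if z1 = z2 then 1 else 0)" unfolding H using Tm_unit by simp
      finally show ?thesis .
    qed
  qed
qed

lemma omega_norm: "(\<Sum>j<8. cnj (omega j) * omega j) = 1"
proof -
  have "cnj (omega j) * omega j = 1/8" for j
  proof -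
    have "cnj (omega j) * omega j = (cnj (cis (- pi * real j / 4)) * cis (- pi * real j / 4)) /
        (complex_of_real (sqrt 8) * complex_of_real (sqrt 8))"
      unfolding omega_def by simp
    also have "\<dots> = 1/8" by (simp add: cis_cnj cis_mult flip: of_real_mult)
    finally show ?thesis .
  qed
  thus ?thesis by (simp only:) simp
qed

lemma omega_sq: "(\<Sum>j<8. omega j * omega j) = 0"
proof -
  have "omega j * omega j = (-\<i>)^j / 8" for j
  proof -
    have "omega j * omega j = (cis (- pi * real j / 4))^2 / (complex_of_real (sqrt 8) * complex_of_real (sqrt 8))"
      unfolding omega_def by (simp add: power2_eq_square)
    also have "(cis (- pi * real j / 4))^2 = cis (2 * (- pi * real j / 4))"
      using Complex.DeMoivre[of "- pi * real j / 4" 2] by (simp only: of_nat_numeral)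
    also have "\<dots> = cis (real j * (-(pi/2)))" by (simp add: field_simps)
    also have "\<dots> = (cis (-(pi/2)))^j" by (rule Complex.DeMoivre[symmetric])
    also have "\<dots> = (-\<i>)^j" by simp
    finally show ?thesis by (simp flip: of_real_mult)
  qed
  hence "(\<Sum>j<8. omega j * omega j) = (\<Sum>j<8. (-\<i>)^j / 8)" by (simp only:)
  also have "\<dots> = (\<Sum>j<8. (-\<i>)^j) / 8" by (simp add: sum_divide_distrib)
  also have "(\<Sum>j<8::nat. (-\<i>)^j) = 0" by (simp add: eval_nat_numeral)
  finally show ?thesis by simp
qed

lemma omega_lemma:
  "(\<Sum>j<8. cnj (a * omega j + b * cnj (omega j)) * (a * omega j + b * cnj (omega j))) = cnj a * a + cnj b * b"
proof -
  have "(\<Sum>j<8. cnj (a * omega j + b * cnj (omega j)) * (a * omega j + b * cnj (omega j)))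
     = (\<Sum>j<8. (cnj a * a + cnj b * b) * (cnj (omega j) * omega j) + cnj a * b * cnj (omega j * omega j)
          + cnj b * a * (omega j * omega j))"
    by (rule sum.cong) (simp_all add: algebra_simps)
  also have "\<dots> = (cnj a * a + cnj b * b) * (\<Sum>j<8. cnj (omega j) * omega j) + cnj a * b * cnj (\<Sum>j<8. omega j * omega j)
          + cnj b * a * (\<Sum>j<8. omega j * omega j)"
    by (simp add: sum.distrib sum_distrib_left)
  also have "\<dots> = cnj a * a + cnj b * b" unfolding omega_norm omega_sq by simp
  finally show ?thesis .
qed

lemma unit2:
  fixes g :: "nat \<Rightarrow> nat \<Rightarrow> complex"
  assumes U: "\<And>z1 z2. z1 < 2 \<Longrightarrow> z2 < 2 \<Longrightarrow> (\<Sum>z'<2. cnj (g z' z1) * g z' z2) = (if z1 = z2 then 1 else 0)"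
  shows "(\<Sum>z'<2. cnj (\<Sum>z<2. g z' z * k z) * (\<Sum>z<2. g z' z * k z)) = (\<Sum>z<2. cnj (k z) * k z)"
proof -
  have "(\<Sum>z'<2. cnj (\<Sum>z<2. g z' z * k z) * (\<Sum>z<2. g z' z * k z))
     = (\<Sum>z1<2. \<Sum>z2<2. cnj (k z1) * k z2 * (\<Sum>z'<2. cnj (g z' z1) * g z' z2))"
    by (simp add: sum2 algebra_simps)
  also have "\<dots> = (\<Sum>z1<2. \<Sum>z2<2. cnj (k z1) * k z2 * (if z1 = z2 then 1 else 0))"
    using U by (intro sum.cong refl) simp
  also have "\<dots> = (\<Sum>z<2. cnj (k z) * k z)" by (simp add: sum2)
  finally show ?thesis .
qed

lemma V0_eq: "V0 = {0..<2} \<times> {1..8} \<times> {0..<8}"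
  unfolding V0_def by auto

lemma finite_V0: "finite V0" unfolding V0_eq by simp

lemma sum_V0: "(\<Sum>u\<in>V0. f u) = (\<Sum>z<2. \<Sum>t\<in>{1..8}. \<Sum>j<8. f (z,t,j))"
  unfolding V0_eq atLeast0LessThan by (simp add: sum.cartesian_product)

definition Wt :: "nat \<Rightarrow> (nat \<times> nat \<times> nat \<Rightarrow> complex) \<Rightarrow> real" where
  "Wt t \<beta> = (\<Sum>z<2. \<Sum>j<8. (cmod (\<beta> (z,t,j)))^2)"

lemma nrm_Wt: "nrm V0 \<beta> = (\<Sum>t\<in>{1..8}. Wt t \<beta>)"
  unfolding nrm_def sum_V0 Wt_def by (rule sum.swap)

lemma sel_Wt:
  assumes "t \<in> {1..8}"
  shows "(\<Sum>u\<in>V0. if fst (snd u) = t then (cmod (\<beta> u))^2 else 0) = Wt t \<beta>"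
proof -
  have "(\<Sum>u\<in>V0. if fst (snd u) = t then (cmod (\<beta> u))^2 else 0)
      = (\<Sum>z<2. \<Sum>t'\<in>{1..8}. if t' = t then (\<Sum>j<8. (cmod (\<beta> (z,t',j)))^2) else 0)"
    unfolding sum_V0 by (intro sum.cong refl) auto
  also have "\<dots> = Wt t \<beta>" unfolding Wt_def using assms by simp
  finally show ?thesis .
qed

definition spanv :: "(nat \<times> nat \<Rightarrow> complex) \<Rightarrow> nat \<times> nat \<times> nat \<Rightarrow> complex" where
  "spanv k = (\<lambda>x. \<Sum>(z,c)\<in>{0..<2}\<times>{0..<2}. k (z,c) * psi z c x)"

lemma beta_val:
  assumes "z' < 2" "t \<in> {1..8}" "j < 8"
  shows "spanv k (z',t,j) = ((\<Sum>z<2. gate_at t z' z * k (z,0)) * omega j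
      + (\<Sum>z<2. cnj (gate_at t z' z) * k (z,1)) * cnj (omega j)) / complex_of_real (sqrt 8)"
proof -
  have inV: "(z',t,j) \<in> V0" using assms unfolding V0_def by auto
  have "spanv k (z',t,j) = (\<Sum>z<2. \<Sum>c<2. k (z,c) * psi z c (z',t,j))"
    unfolding spanv_def atLeast0LessThan by (simp add: sum.cartesian_product)
  also have "\<dots> = (\<Sum>z<2. k (z,0) * (gate_at t z' z * omega j / complex_of_real (sqrt 8))
        + k (z,1) * cnj (gate_at t z' z * omega j / complex_of_real (sqrt 8)))"
    unfolding sum2[of "\<lambda>c. k (_,c) * psi _ c (z',t,j)"] using inV
    by (intro sum.cong refl) (simp add: psi_def Let_def)
  also have "\<dots> = ((\<Sum>z<2. gate_at t z' z * k (z,0)) * omega j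
      + (\<Sum>z<2. cnj (gate_at t z' z) * k (z,1)) * cnj (omega j)) / complex_of_real (sqrt 8)"
    by (simp add: sum2 field_simps)
  finally show ?thesis .
qed

lemma cn: "complex_of_real ((cmod z)^2) = cnj z * z"
  by (simp only: complex_norm_square mult.commute)

lemma Wt_span:
  assumes t: "t \<in> {1..8}"
  shows "Wt t (spanv k) = (\<Sum>z<2. (cmod (k (z,0)))^2 + (cmod (k (z,1)))^2) / 8"
proof -
  define a where "a = (\<lambda>z'. \<Sum>z<2. gate_at t z' z * k (z,0))"
  define b where "b = (\<lambda>z'. \<Sum>z<2. cnj (gate_at t z' z) * k (z,1))"
  have U1: "\<And>z1 z2. z1 < 2 \<Longrightarrow> z2 < 2 \<Longrightarrow> (\<Sum>z'<2. cnj (gate_at t z' z1) * gate_at t z' z2) = (if z1 = z2 then 1 else 0)"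
    by (rule gate_unitary)
  have U2: "(\<Sum>z'<2. cnj (cnj (gate_at t z' z1)) * cnj (gate_at t z' z2)) = (if z1 = z2 then 1 else 0)"
    if "z1 < 2" "z2 < 2" for z1 z2
  proof -
    have "(\<Sum>z'<2. cnj (cnj (gate_at t z' z1)) * cnj (gate_at t z' z2)) = cnj (\<Sum>z'<2. cnj (gate_at t z' z1) * gate_at t z' z2)"
      by simp
    also have "\<dots> = (if z1 = z2 then 1 else 0)" using U1[OF that] by auto
    finally show ?thesis .
  qed
  have "complex_of_real (Wt t (spanv k)) = (\<Sum>z'<2. \<Sum>j<8. cnj (spanv k (z',t,j)) * spanv k (z',t,j))"
    unfolding Wt_def of_real_sum by (intro sum.cong refl) (simp only: complex_norm_square mult.commute)
  also have "\<dots> = (\<Sum>z'<2. (\<Sum>j<8. cnj (a z' * omega j + b z' * cnj (omega j)) * (a z' * omega j + b z' * cnj (omega j))) / 8)"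
  proof (intro sum.cong refl)
    fix z' assume z': "z' \<in> {..<2::nat}"
    have "(\<Sum>j<8. cnj (spanv k (z',t,j)) * spanv k (z',t,j)) =
       (\<Sum>j<8. cnj (a z' * omega j + b z' * cnj (omega j)) * (a z' * omega j + b z' * cnj (omega j)) / 8)"
    proof (intro sum.cong refl)
      fix j assume "j \<in> {..<8::nat}"
      hence "spanv k (z',t,j) = (a z' * omega j + b z' * cnj (omega j)) / complex_of_real (sqrt 8)"
        using beta_val[of z' t j k] z' t unfolding a_def b_def by auto
      moreover have s8: "complex_of_real (sqrt 8) * complex_of_real (sqrt 8) = 8" by (simp flip: of_real_mult)
      moreover have "cnj (X / complex_of_real (sqrt 8)) * (X / complex_of_real (sqrt 8)) = cnj X * X / (complex_of_real (sqrt 8) * complex_of_real (sqrt 8))" for X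
        by simp
      ultimately show "cnj (spanv k (z',t,j)) * spanv k (z',t,j) =
           cnj (a z' * omega j + b z' * cnj (omega j)) * (a z' * omega j + b z' * cnj (omega j)) / 8"
        by (simp only: s8)
    qed
    thus "(\<Sum>j<8. cnj (spanv k (z',t,j)) * spanv k (z',t,j)) =
       (\<Sum>j<8. cnj (a z' * omega j + b z' * cnj (omega j)) * (a z' * omega j + b z' * cnj (omega j))) / 8"
      by (simp add: sum_divide_distrib)
  qed
  also have "\<dots> = ((\<Sum>z'<2. cnj (a z') * a z') + (\<Sum>z'<2. cnj (b z') * b z')) / 8"
    unfolding omega_lemma by (simp only: sum.distrib sum_divide_distrib add_divide_distrib)
  also have "(\<Sum>z'<2. cnj (a z') * a z') = (\<Sum>z<2. cnj (k (z,0)) * k (z,0))"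
    unfolding a_def by (rule unit2[OF U1])
  also have "(\<Sum>z'<2. cnj (b z') * b z') = (\<Sum>z<2. cnj (k (z,1)) * k (z,1))"
    unfolding b_def by (rule unit2[OF U2])
  also have "((\<Sum>z<2. cnj (k (z,0)) * k (z,0)) + (\<Sum>z<2. cnj (k (z,1)) * k (z,1))) / 8
      = complex_of_real ((\<Sum>z<2. (cmod (k (z,0)))^2 + (cmod (k (z,1)))^2) / 8)"
    by (simp only: of_real_divide of_real_sum of_real_add cn sum.distrib of_real_numeral)
  finally show ?thesis by (simp only: of_real_eq_iff)
qed


lemma VG_eq: "VG R = {1..R} \<times> V0"
  unfolding VG_def by auto

lemma finite_VG: "finite (VG R)" unfolding VG_eq using finite_V0 by simp

lemma sum_VG: "(\<Sum>x\<in>VG R. f x) = (\<Sum>q\<in>{1..R}. \<Sum>u\<in>V0. f (q,u))"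
  unfolding VG_eq by (simp add: sum.cartesian_product)

definition B0 :: "((nat \<times> nat \<times> nat) \<Rightarrow> (nat \<times> nat \<times> nat) \<Rightarrow> complex) \<Rightarrow> vert \<Rightarrow> vert \<Rightarrow> complex" where
  "B0 A0 x y = (if fst x = fst y then A0 (snd x) (snd y) else 0)"

definition HS :: "(nat \<times> nat \<times> nat) set \<Rightarrow> vert \<Rightarrow> vert \<Rightarrow> complex" where
  "HS S x y = (if x = y \<and> node_of x \<in> S then 1 else 0)"

definition HE :: "(nat \<times> nat \<times> nat) set set \<Rightarrow> vert \<Rightarrow> vert \<Rightarrow> complex" where
  "HE E x y = (\<Sum>e\<in>E. if node_of x \<in> e \<and> node_of y \<in> e \<and> jof x = jof y then 1 else 0)"

lemma AG_split: "AG A0 S E = (\<lambda>x y. B0 A0 x y + HS S x y + HE E x y)"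
proof (intro ext)
  fix x y :: vert
  obtain q z t j where x: "x = (q,z,t,j)" by (cases x) auto
  obtain q' z' t' j' where y: "y = (q',z',t',j')" by (cases y) auto
  show "AG A0 S E x y = B0 A0 x y + HS S x y + HE E x y"
    unfolding x y AG_def B0_def HS_def HE_def node_of_def jof_def by auto
qed

lemma qform_add3: "qform V (\<lambda>x y. M1 x y + M2 x y + M3 x y) u = qform V M1 u + qform V M2 u + qform V M3 u"
  unfolding qform_def cinner_def mvec_def by (simp add: distrib_left distrib_right sum.distrib)

lemma qform_B0: "qform (VG R) (B0 A0) \<alpha> = (\<Sum>q\<in>{1..R}. qform V0 A0 (\<lambda>u. if u \<in> V0 then \<alpha> (q,u) else 0))"
proof -
  have inner: "(\<Sum>y\<in>VG R. B0 A0 (q,u) y * \<alpha> y) = (\<Sum>u'\<in>V0. A0 u u' * \<alpha> (q,u'))" if "q \<in> {1..R}" for q u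
  proof -
    have "(\<Sum>y\<in>VG R. B0 A0 (q,u) y * \<alpha> y) = (\<Sum>q'\<in>{1..R}. \<Sum>u'\<in>V0. if q = q' then A0 u u' * \<alpha> (q',u') else 0)"
      unfolding sum_VG B0_def by (intro sum.cong refl) auto
    also have "\<dots> = (\<Sum>q'\<in>{1..R}. if q = q' then (\<Sum>u'\<in>V0. A0 u u' * \<alpha> (q',u')) else 0)"
      by (intro sum.cong refl) auto
    also have "\<dots> = (\<Sum>u'\<in>V0. A0 u u' * \<alpha> (q,u'))" using that by simp
    finally show ?thesis .
  qed
  have "qform (VG R) (B0 A0) \<alpha> = (\<Sum>x\<in>VG R. cnj (\<alpha> x) * (\<Sum>y\<in>VG R. B0 A0 x y * \<alpha> y))"
    unfolding qform_def cinner_def mvec_def ..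
  also have "\<dots> = (\<Sum>q\<in>{1..R}. \<Sum>u\<in>V0. cnj (\<alpha> (q,u)) * (\<Sum>y\<in>VG R. B0 A0 (q,u) y * \<alpha> y))"
    by (rule sum_VG)
  also have "\<dots> = (\<Sum>q\<in>{1..R}. qform V0 A0 (\<lambda>u. if u \<in> V0 then \<alpha> (q,u) else 0))"
    unfolding qform_def cinner_def mvec_def
    by (intro sum.cong refl) (simp add: inner)
  finally show ?thesis .
qed

lemma nrm_VG: "nrm (VG R) \<alpha> = (\<Sum>q\<in>{1..R}. nrm V0 (\<lambda>u. if u \<in> V0 then \<alpha> (q,u) else 0))"
  unfolding nrm_def sum_VG by (intro sum.cong refl) auto

lemma qform_HS_nonneg: assumes fV: "finite V" shows "0 \<le> Re (qform V (HS S) u)"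
proof -
  have "qform V (HS S) u = (\<Sum>x\<in>V. if node_of x \<in> S then cnj (u x) * u x else 0)"
    unfolding qform_def cinner_def
  proof (intro sum.cong refl)
    fix x assume x: "x \<in> V"
    have "mvec V (HS S) u x = (\<Sum>y\<in>V. if y = x then (if node_of x \<in> S then u x else 0) else 0)"
      unfolding mvec_def HS_def by (intro sum.cong refl) auto
    also have "\<dots> = (if node_of x \<in> S then u x else 0)" using x fV by simp
    finally show "cnj (u x) * mvec V (HS S) u x = (if node_of x \<in> S then cnj (u x) * u x else 0)" by simp
  qed
  hence "Re (qform V (HS S) u) = (\<Sum>x\<in>V. if node_of x \<in> S then (cmod (u x))^2 else 0)"
    by (simp add: cn[symmetric] if_distrib cong: if_cong)
  thus ?thesis by (simp add: sum_nonneg)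
qed

lemma gram_nonneg:
  assumes fI: "finite I"
    and K: "\<And>x y. x \<in> V \<Longrightarrow> y \<in> V \<Longrightarrow> M x y = (\<Sum>i\<in>I. cnj (f i x) * f i y)"
  shows "0 \<le> Re (qform V M u)"
proof -
  have "qform V M u = (\<Sum>x\<in>V. \<Sum>y\<in>V. \<Sum>i\<in>I. cnj (f i x * u x) * (f i y * u y))"
    unfolding qform_def cinner_def mvec_def
    by (intro sum.cong refl) (simp add: K sum_distrib_left sum_distrib_right ac_simps)
  also have "\<dots> = (\<Sum>x\<in>V. \<Sum>i\<in>I. \<Sum>y\<in>V. cnj (f i x * u x) * (f i y * u y))"
    by (intro sum.cong refl) (rule sum.swap)
  also have "\<dots> = (\<Sum>i\<in>I. \<Sum>x\<in>V. \<Sum>y\<in>V. cnj (f i x * u x) * (f i y * u y))"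
    by (rule sum.swap)
  also have "\<dots> = (\<Sum>i\<in>I. cnj (\<Sum>x\<in>V. f i x * u x) * (\<Sum>y\<in>V. f i y * u y))"
    by (simp only: sum_product cnj_sum)
  also have "\<dots> = (\<Sum>i\<in>I. complex_of_real ((cmod (\<Sum>x\<in>V. f i x * u x))^2))"
    by (simp only: cn)
  finally show ?thesis by (simp add: sum_nonneg)
qed

lemma sum_prod': "(\<Sum>i\<in>A\<times>B. g i) = (\<Sum>a\<in>A. \<Sum>b\<in>B. g (a,b))"
  using sum.cartesian_product[of "\<lambda>a b. g (a,b)" B A] by simp

lemma jof_lt: "x \<in> VG R \<Longrightarrow> jof x < 8"
  unfolding VG_def V0_def jof_def by auto

lemma qform_HE_nonneg:
  assumes fE: "finite E"
  shows "0 \<le> Re (qform (VG R) (HE E) u)"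
proof (rule gram_nonneg[where I = "E \<times> {0..<8}" and f = "\<lambda>(e,j) x. if node_of x \<in> e \<and> jof x = j then 1 else 0"])
  show "finite (E \<times> {0..<8::nat})" using fE by simp
  fix x y assume x: "x \<in> VG R" and y: "y \<in> VG R"
  have "(\<Sum>i\<in>E \<times> {0..<8}. cnj ((\<lambda>(e,j) x. if node_of x \<in> e \<and> jof x = j then 1 else 0) i x) *
          (\<lambda>(e,j) x. if node_of x \<in> e \<and> jof x = j then 1 else 0) i y)
      = (\<Sum>e\<in>E. \<Sum>j\<in>{0..<8}. if j = jof x then (if node_of x \<in> e \<and> node_of y \<in> e \<and> jof x = jof y then 1 else 0) else 0)"
    unfolding sum_prod' by (intro sum.cong refl) auto
  also have "\<dots> = HE E x y" unfolding HE_def using jof_lt[OF x] by simp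
  finally show "HE E x y = (\<Sum>i\<in>E \<times> {0..<8}. cnj ((\<lambda>(e,j) x. if node_of x \<in> e \<and> jof x = j then 1 else 0) i x) *
          (\<lambda>(e,j) x. if node_of x \<in> e \<and> jof x = j then 1 else 0) i y)" by simp
qed

lemma g0_facts:
  assumes "is_g0 A0" "x \<in> V0" "y \<in> V0"
  shows "A0 y x = A0 x y" "cnj (A0 x y) = A0 x y"
proof -
  have "(A0 x y = 0 \<or> A0 x y = 1) \<and> A0 x y = A0 y x" using assms unfolding is_g0_def by blast
  thus "A0 y x = A0 x y" "cnj (A0 x y) = A0 x y" by auto
qed

lemma herm_A0: "is_g0 A0 \<Longrightarrow> herm V0 A0"
  unfolding herm_def using g0_facts by metis

lemma herm_AG:
  assumes g0: "is_g0 A0"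
  shows "herm (VG R) (AG A0 S E)"
  unfolding herm_def AG_split
proof (intro ballI)
  fix x y assume x: "x \<in> VG R" and y: "y \<in> VG R"
  have sx: "snd x \<in> V0" and sy: "snd y \<in> V0" using x y unfolding VG_eq by auto
  have "B0 A0 y x = cnj (B0 A0 x y)" unfolding B0_def using g0_facts[OF g0 sx sy] by auto
  moreover have "HS S y x = cnj (HS S x y)" unfolding HS_def by auto
  moreover have "HE E y x = cnj (HE E x y)" unfolding HE_def cnj_sum
    by (intro sum.cong refl) auto
  ultimately show "B0 A0 y x + HS S y x + HE E y x = cnj (B0 A0 x y + HS S x y + HE E x y)" by simp
qed

lemma VP0:
  assumes g0: "is_g0 A0" and su: "supported V0 u"
  shows "e1 * nrm V0 u \<le> Re (qform V0 A0 u)"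
proof (rule var_principle[OF finite_V0 herm_A0[OF g0] _ su])
  fix \<mu> assume "has_eigenvalue V0 A0 \<mu>"
  thus "e1 \<le> \<mu>" using g0 unfolding is_g0_def min_eigenvalue_def by blast
qed

lemma qform_eigen:
  assumes "v \<in> eigenspace V M e"
  shows "qform V M v = complex_of_real e * cinner V v v"
proof -
  have "qform V M v = (\<Sum>x\<in>V. complex_of_real e * (cnj (v x) * v x))"
    unfolding qform_def cinner_def using assms unfolding eigenspace_def
    by (intro sum.cong refl) auto
  thus ?thesis unfolding cinner_def by (simp add: sum_distrib_left)
qed

lemma struct:
  assumes g0: "is_g0 A0" and fE: "finite E"
    and \<alpha>: "\<alpha> \<in> eigenspace (VG R) (AG A0 S E) e1" and q: "q \<in> {1..R}"
  shows "(\<lambda>u. if u \<in> V0 then \<alpha> (q,u) else 0) \<in> eigenspace V0 A0 e1"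
proof -
  define sl where "sl = (\<lambda>q u. if u \<in> V0 then \<alpha> (q,u) else (0::complex))"
  have ssl: "supported V0 (sl q)" for q unfolding sl_def supported_def by simp
  define D where "D = (\<lambda>q. Re (qform V0 A0 (sl q)) - e1 * nrm V0 (sl q))"
  have Dn: "0 \<le> D q" for q using VP0[OF g0 ssl] unfolding D_def by simp
  have "Re (qform (VG R) (AG A0 S E) \<alpha>) = e1 * nrm (VG R) \<alpha>"
    unfolding qform_eigen[OF \<alpha>] cinner_self by simp
  moreover have "Re (qform (VG R) (AG A0 S E) \<alpha>) = (\<Sum>q\<in>{1..R}. Re (qform V0 A0 (sl q)))
      + Re (qform (VG R) (HS S) \<alpha>) + Re (qform (VG R) (HE E) \<alpha>)"
    unfolding AG_split qform_add3 qform_B0 sl_def by simp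
  moreover have "nrm (VG R) \<alpha> = (\<Sum>q\<in>{1..R}. nrm V0 (sl q))" unfolding nrm_VG sl_def ..
  ultimately have "(\<Sum>q\<in>{1..R}. D q) + Re (qform (VG R) (HS S) \<alpha>) + Re (qform (VG R) (HE E) \<alpha>) = 0"
    unfolding D_def by (simp add: sum_subtractf sum_distrib_left)
  moreover have "0 \<le> Re (qform (VG R) (HS S) \<alpha>)" by (rule qform_HS_nonneg[OF finite_VG])
  moreover have "0 \<le> Re (qform (VG R) (HE E) \<alpha>)" by (rule qform_HE_nonneg[OF fE])
  moreover have "0 \<le> (\<Sum>q\<in>{1..R}. D q)" using Dn by (simp add: sum_nonneg)
  ultimately have "(\<Sum>q\<in>{1..R}. D q) = 0" by linarith
  hence Dq: "D q = 0" using q Dn by (subst (asm) sum_nonneg_eq_0_iff) auto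
  define P where "P = (\<lambda>x y. A0 x y - (if x = y then complex_of_real e1 else 0))"
  have hP: "herm V0 P" unfolding herm_def
  proof (intro ballI)
    fix x y assume xy: "x \<in> V0" "y \<in> V0"
    hence "A0 y x = cnj (A0 x y)" using herm_A0[OF g0] unfolding herm_def by blast
    thus "P y x = cnj (P x y)" unfolding P_def by simp
  qed
  have psd: "0 \<le> Re (qform V0 P w)" if "supported V0 w" for w
    using VP0[OF g0 that] unfolding P_def qform_shift[OF finite_V0] cinner_self by simp
  have z: "Re (qform V0 P (sl q)) = 0"
    using Dq unfolding D_def P_def qform_shift[OF finite_V0] cinner_self by simp
  have "\<forall>x\<in>V0. mvec V0 P (sl q) x = 0" by (rule psd_zero[OF finite_V0 hP psd ssl z])
  hence "\<forall>x\<in>V0. mvec V0 A0 (sl q) x = complex_of_real e1 * sl q x"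
    unfolding P_def using mvec_shift[OF finite_V0] by simp
  thus ?thesis unfolding eigenspace_def using ssl[of q] unfolding sl_def by simp
qed

lemma finite_nodes: "finite (nodes R U)"
proof (rule finite_subset)
  show "nodes R U \<subseteq> {..R} \<times> {..<2} \<times> {..8}"
  proof
    fix x assume x: "x \<in> nodes R U"
    have T: "Tset u \<subseteq> {..8}" for u by (cases u) (auto simp: Tset_def)
    obtain q z t where xx: "x = (q,z,t)" by (cases x) auto
    show "x \<in> {..R} \<times> {..<2} \<times> {..8}" using x T[of "U q"] unfolding xx nodes_def by auto
  qed
qed simp

lemma finite_E: "gate_diagram R U S E \<Longrightarrow> finite E"
  unfolding gate_diagram_def
  by (rule finite_subset[of E "Pow (nodes R U)"]) (auto simp: finite_nodes)

definition nN :: "nat \<Rightarrow> (nat \<times> nat \<times> nat) set \<Rightarrow> (nat \<times> nat \<times> nat) set set \<Rightarrow> (vert \<Rightarrow> complex) \<Rightarrow> real" where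
  "nN R S E \<alpha> = (\<Sum>x\<in>VG R. if x \<in> Nset R S E then (cmod (\<alpha> x))^2 else 0)"

lemma span_Wt:
  assumes g0: "is_g0 A0" and b: "\<beta> \<in> eigenspace V0 A0 e1" and t: "t \<in> {1..8}"
  shows "Wt t \<beta> = nrm V0 \<beta> / 8"
proof -
  have "eigenspace V0 A0 e1 = {spanv k | k. True}" using g0 unfolding is_g0_def spanv_def by blast
  then obtain k where k: "\<beta> = spanv k" using b by blast
  define K where "K = (\<Sum>z<2. (cmod (k (z,0)))^2 + (cmod (k (z,1)))^2) / 8"
  have "(\<Sum>t'\<in>{1..8}. Wt t' (spanv k)) = (\<Sum>t'\<in>{1..8::nat}. K)"
    by (intro sum.cong refl) (simp only: Wt_span K_def)
  thus ?thesis unfolding k nrm_Wt using Wt_span[OF t] K_def by simp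
qed

lemma keybound:
  assumes g0: "is_g0 A0" and dg: "gate_diagram R U S E"
    and \<alpha>: "\<alpha> \<in> eigenspace (VG R) (AG A0 S E) e1"
  shows "nrm (VG R) \<alpha> \<le> 8 * nN R S E \<alpha>"
proof -
  define sl where "sl = (\<lambda>q u. if u \<in> V0 then \<alpha> (q,u) else (0::complex))"
  define tq where "tq = (\<lambda>q. if U q = Id1 then 2 else (5::nat))"
  have tq1: "tq q \<in> {1..8}" for q unfolding tq_def by auto
  have ein: "sl q \<in> eigenspace V0 A0 e1" if "q \<in> {1..R}" for q
    unfolding sl_def by (rule struct[OF g0 finite_E[OF dg] \<alpha> that])
  have inN: "(q,u) \<in> Nset R S E" if q: "q \<in> {1..R}" and u: "u \<in> V0" and tu: "fst (snd u) = tq q" for q u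
  proof -
    obtain z t j where uu: "u = (z,t,j)" by (cases u) auto
    have "tq q \<notin> {1,3} \<union> Tset (U q)" by (cases "U q") (auto simp: tq_def Tset_def)
    hence "node_of (q,u) \<notin> nodes R U"
      using tu unfolding uu node_of_def nodes_def by simp
    moreover have "(q,u) \<in> VG R" using q u unfolding VG_eq by auto
    moreover have "S \<subseteq> nodes R U" "\<forall>e\<in>E. e \<subseteq> nodes R U" using dg unfolding gate_diagram_def by auto
    ultimately show ?thesis unfolding Nset_def by auto
  qed
  have "nrm (VG R) \<alpha> / 8 = (\<Sum>q\<in>{1..R}. nrm V0 (sl q) / 8)"
    unfolding nrm_VG sl_def by (simp add: sum_divide_distrib)
  also have "\<dots> = (\<Sum>q\<in>{1..R}. Wt (tq q) (sl q))"
    by (intro sum.cong refl) (simp only: span_Wt[OF g0 ein tq1])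
  also have "\<dots> = (\<Sum>q\<in>{1..R}. \<Sum>u\<in>V0. if fst (snd u) = tq q then (cmod (sl q u))^2 else 0)"
    using sel_Wt[OF tq1] by simp
  also have "\<dots> \<le> (\<Sum>q\<in>{1..R}. \<Sum>u\<in>V0. if (q,u) \<in> Nset R S E then (cmod (\<alpha> (q,u)))^2 else 0)"
    using inN unfolding sl_def by (intro sum_mono) auto
  also have "\<dots> = nN R S E \<alpha>" unfolding nN_def sum_VG ..
  finally show ?thesis by simp
qed


lemma sum_VSL: "(\<Sum>w\<in>VSL R. f w) = (\<Sum>x\<in>VG R. f (x,0) + f (x,1))"
  unfolding VSL_def sum_prod' by simp

lemma N_sub: "Nset R S E \<subseteq> VG R" unfolding Nset_def by auto

lemma penalty_mvec:
  assumes x: "x \<in> VG R"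
  shows "mvec (VSL R) (penalty R S E) w (x,d) = (if x \<in> Nset R S E then w (x,0) + w (x,1) else 0)"
proof -
  have "mvec (VSL R) (penalty R S E) w (x,d) = (\<Sum>y\<in>VG R. if y = x then (if x \<in> Nset R S E then w (x,0) + w (x,1) else 0) else 0)"
    unfolding mvec_def sum_VSL by (intro sum.cong refl) (auto simp: penalty_def Piplus_def)
  also have "\<dots> = (if x \<in> Nset R S E then w (x,0) + w (x,1) else 0)" using x finite_VG by simp
  finally show ?thesis .
qed

lemma ASL_mvec:
  assumes x: "x \<in> VG R" and d: "d \<in> {0,1}"
  shows "mvec (VSL R) (ASL A0 R S E) w (x,d) = mvec (VG R) (AG A0 S E) (\<lambda>y. w (y,d)) x
      + (if x \<in> Nset R S E then w (x,0) + w (x,1) else 0)"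
proof -
  have "mvec (VSL R) (ASL A0 R S E) w (x,d) = (\<Sum>y\<in>VSL R. AG A0 S E x (fst y) * (if d = snd y then 1 else 0) * w y)
      + mvec (VSL R) (penalty R S E) w (x,d)"
    unfolding mvec_def ASL_def by (simp add: distrib_right sum.distrib split_def)
  also have "(\<Sum>y\<in>VSL R. AG A0 S E x (fst y) * (if d = snd y then 1 else 0) * w y) = mvec (VG R) (AG A0 S E) (\<lambda>y. w (y,d)) x"
    unfolding sum_VSL mvec_def using d by (intro sum.cong refl) auto
  finally show ?thesis unfolding penalty_mvec[OF x] .
qed

lemma mvec_diff: "mvec V M (\<lambda>y. f y - g y) x = mvec V M f x - mvec V M g x"
  unfolding mvec_def by (simp add: right_diff_distrib sum_subtractf)

lemma mvec_add: "mvec V M (\<lambda>y. f y + g y) x = mvec V M f x + mvec V M g x"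
  unfolding mvec_def by (simp add: distrib_left sum.distrib)

lemma mvec_scale: "mvec V M (\<lambda>y. c * f y) x = c * mvec V M f x"
  unfolding mvec_def by (simp add: sum_distrib_left ac_simps)

lemma eig_decomp:
  assumes w: "w \<in> eigenspace (VSL R) (ASL A0 R S E) \<mu>" and x: "x \<in> VG R"
  shows "mvec (VG R) (AG A0 S E) (\<lambda>y. w (y,0) - w (y,1)) x = complex_of_real \<mu> * (w (x,0) - w (x,1))"
    "mvec (VG R) (AG A0 S E) (\<lambda>y. w (y,0) + w (y,1)) x
       + (if x \<in> Nset R S E then 2 * (w (x,0) + w (x,1)) else 0) = complex_of_real \<mu> * (w (x,0) + w (x,1))"
proof -
  have i0: "(x,0) \<in> VSL R" and i1: "(x,1) \<in> VSL R" using x unfolding VSL_def by auto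
  have e0: "mvec (VG R) (AG A0 S E) (\<lambda>y. w (y,0)) x + (if x \<in> Nset R S E then w (x,0) + w (x,1) else 0)
      = complex_of_real \<mu> * w (x,0)"
    using w i0 ASL_mvec[OF x, where d=0 and w=w] unfolding eigenspace_def by auto
  have e1: "mvec (VG R) (AG A0 S E) (\<lambda>y. w (y,1)) x + (if x \<in> Nset R S E then w (x,0) + w (x,1) else 0)
      = complex_of_real \<mu> * w (x,1)"
    using w i1 ASL_mvec[OF x, where d=1 and w=w] unfolding eigenspace_def by auto
  show "mvec (VG R) (AG A0 S E) (\<lambda>y. w (y,0) - w (y,1)) x = complex_of_real \<mu> * (w (x,0) - w (x,1))"
    unfolding mvec_diff using e0 e1 by (simp add: right_diff_distrib) (metis add_diff_cancel_right)
  show "mvec (VG R) (AG A0 S E) (\<lambda>y. w (y,0) + w (y,1)) x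
       + (if x \<in> Nset R S E then 2 * (w (x,0) + w (x,1)) else 0) = complex_of_real \<mu> * (w (x,0) + w (x,1))"
  proof -
    let ?P = "(if x \<in> Nset R S E then w (x,0) + w (x,1) else 0)"
    have "(mvec (VG R) (AG A0 S E) (\<lambda>y. w (y,0)) x + ?P) + (mvec (VG R) (AG A0 S E) (\<lambda>y. w (y,1)) x + ?P)
       = complex_of_real \<mu> * w (x,0) + complex_of_real \<mu> * w (x,1)" by (simp only: e0 e1)
    thus ?thesis unfolding mvec_add by (cases "x \<in> Nset R S E") (simp_all add: algebra_simps)
  qed
qed

lemma qform_eq_pen:
  assumes h: "\<forall>x\<in>VG R. mvec (VG R) M v x + (if x \<in> Nset R S E then 2 * v x else 0) = complex_of_real \<mu> * v x"
  shows "Re (qform (VG R) M v) = \<mu> * nrm (VG R) v - 2 * nN R S E v"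
proof -
  have "qform (VG R) M v = (\<Sum>x\<in>VG R. complex_of_real \<mu> * (cnj (v x) * v x)
       - (if x \<in> Nset R S E then 2 * (cnj (v x) * v x) else 0))"
    unfolding qform_def cinner_def
  proof (intro sum.cong refl)
    fix x assume x: "x \<in> VG R"
    have e: "mvec (VG R) M v x + (if x \<in> Nset R S E then 2 * v x else 0) = complex_of_real \<mu> * v x"
      using h x by blast
    have "mvec (VG R) M v x = complex_of_real \<mu> * v x - (if x \<in> Nset R S E then 2 * v x else 0)"
      by (subst eq_diff_eq) (rule e)
    show "cnj (v x) * mvec (VG R) M v x = complex_of_real \<mu> * (cnj (v x) * v x)
       - (if x \<in> Nset R S E then 2 * (cnj (v x) * v x) else 0)"
      unfolding \<open>mvec (VG R) M v x = _\<close> by (cases "x \<in> Nset R S E") (simp_all add: algebra_simps)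
  qed
  also have "\<dots> = complex_of_real \<mu> * cinner (VG R) v v - 2 * complex_of_real (nN R S E v)"
  proof -
    have "complex_of_real (nN R S E v) = (\<Sum>x\<in>VG R. if x \<in> Nset R S E then cnj (v x) * v x else 0)"
      unfolding nN_def of_real_sum by (intro sum.cong refl, simp only: cn[symmetric] of_real_0 split: if_split, blast)
    moreover have "(\<Sum>x\<in>VG R. if x \<in> Nset R S E then 2 * (cnj (v x) * v x) else 0)
        = 2 * (\<Sum>x\<in>VG R. if x \<in> Nset R S E then cnj (v x) * v x else 0)"
      unfolding sum_distrib_left by (intro sum.cong refl) simp
    ultimately show ?thesis unfolding cinner_def sum_subtractf by (simp only: sum_distrib_left)
  qed
  finally show ?thesis unfolding cinner_self by simp
qed

lemma nN_nonneg: "0 \<le> nN R S E v"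
  unfolding nN_def by (simp add: sum_nonneg)

lemma nN_zero:
  assumes "nN R S E v = 0" "x \<in> Nset R S E" shows "v x = 0"
proof -
  have "\<forall>x\<in>VG R. (if x \<in> Nset R S E then (cmod (v x))^2 else 0) = 0"
    using assms(1) finite_VG unfolding nN_def by (subst sum_nonneg_eq_0_iff[symmetric]) auto
  thus ?thesis using assms(2) N_sub by force
qed

theorem lemma1:
  fixes A0 :: "(nat \<times> nat \<times> nat) \<Rightarrow> (nat \<times> nat \<times> nat) \<Rightarrow> complex"
    and R :: nat and U :: "nat \<Rightarrow> glabel"
    and S :: "(nat \<times> nat \<times> nat) set" and E :: "(nat \<times> nat \<times> nat) set set"
  assumes g0: "is_g0 A0"
    and diagram: "gate_diagram R U S E"
    and gate_graph: "min_eigenvalue (VG R) (AG A0 S E) e1"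
  shows "min_eigenvalue (VSL R) (ASL A0 R S E) e1
     \<and> eigenspace (VSL R) (ASL A0 R S E) e1
         = {tensor_pm (-1) \<alpha> | \<alpha>. \<alpha> \<in> eigenspace (VG R) (AG A0 S E) e1}
     \<and> (\<forall>v \<in> {tensor_pm 1 \<alpha> | \<alpha>. \<alpha> \<in> eigenspace (VG R) (AG A0 S E) e1}.
           cinner (VSL R) v v = 1 \<longrightarrow> 1/4 \<le> Re (qform (VSL R) (penalty R S E) v))"
proof -
  have hG: "herm (VG R) (AG A0 S E)" by (rule herm_AG[OF g0])
  have VPG: "e1 * nrm (VG R) u \<le> Re (qform (VG R) (AG A0 S E) u)" if "supported (VG R) u" for u
  proof (rule var_principle[OF finite_VG hG _ that])
    fix \<mu> assume "has_eigenvalue (VG R) (AG A0 S E) \<mu>"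
    thus "e1 \<le> \<mu>" using gate_graph unfolding min_eigenvalue_def by blast
  qed
  define s2 where "s2 = complex_of_real (sqrt 2)"
  have s2: "s2 * s2 = 2" "cnj s2 = s2" "s2 \<noteq> 0" unfolding s2_def by (auto simp flip: of_real_mult)
  have tp: "tensor_pm s \<alpha> (x,d) = \<alpha> x * (if d = 0 then 1 / s2 else if d = 1 then s / s2 else 0)" for s \<alpha> x d
    unfolding tensor_pm_def s2_def by simp
  have minus_in: "tensor_pm (-1) \<alpha> \<in> eigenspace (VSL R) (ASL A0 R S E) e1"
    if \<alpha>: "\<alpha> \<in> eigenspace (VG R) (AG A0 S E) e1" for \<alpha>
  proof -
    have sa: "supported (VG R) \<alpha>" and ea: "\<forall>x\<in>VG R. mvec (VG R) (AG A0 S E) \<alpha> x = complex_of_real e1 * \<alpha> x"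
      using \<alpha> unfolding eigenspace_def by auto
    have sup: "supported (VSL R) (tensor_pm (-1) \<alpha>)"
      unfolding supported_def
    proof (intro allI impI)
      fix xd assume xd: "xd \<notin> VSL R"
      obtain x d where xdd: "xd = (x,d)" by (cases xd)
      show "tensor_pm (-1) \<alpha> xd = 0"
      proof (cases "x \<in> VG R")
        case True hence "d \<notin> {0,1}" using xd xdd unfolding VSL_def by auto
        thus ?thesis unfolding xdd tp by auto
      next
        case False hence "\<alpha> x = 0" using sa unfolding supported_def by blast
        thus ?thesis unfolding xdd tp by simp
      qed
    qed
    have ev: "mvec (VSL R) (ASL A0 R S E) (tensor_pm (-1) \<alpha>) xd = complex_of_real e1 * tensor_pm (-1) \<alpha> xd"
      if xd: "xd \<in> VSL R" for xd
    proof -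
      obtain x d where xdd: "xd = (x,d)" by (cases xd)
      have x: "x \<in> VG R" and d: "d \<in> {0,1}" using xd unfolding xdd VSL_def by auto
      define c where "c = (if d = 0 then 1 / s2 else if d = 1 then -1 / s2 else 0)"
      have "(\<lambda>y. tensor_pm (-1) \<alpha> (y,d)) = (\<lambda>y. c * \<alpha> y)"
        unfolding tp c_def by (auto simp: mult.commute)
      hence "mvec (VG R) (AG A0 S E) (\<lambda>y. tensor_pm (-1) \<alpha> (y,d)) x = c * (complex_of_real e1 * \<alpha> x)"
        using ea x by (simp add: mvec_scale)
      moreover have "tensor_pm (-1) \<alpha> (x,0) + tensor_pm (-1) \<alpha> (x,1) = 0" unfolding tp by simp
      moreover have "tensor_pm (-1) \<alpha> (x,d) = c * \<alpha> x" unfolding tp c_def by simp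
      ultimately show ?thesis unfolding xdd ASL_mvec[OF x d] by simp
    qed
    show ?thesis unfolding eigenspace_def using sup ev by blast
  qed
  have ev_ge: "e1 \<le> \<mu>" if hh: "has_eigenvalue (VSL R) (ASL A0 R S E) \<mu>" for \<mu>
  proof -
    obtain w xd where w: "w \<in> eigenspace (VSL R) (ASL A0 R S E) \<mu>" and xd: "xd \<in> VSL R" "w xd \<noteq> 0"
      using hh unfolding has_eigenvalue_def by blast
    obtain x0 d0 where xdd: "xd = (x0,d0)" by (cases xd)
    have x0: "x0 \<in> VG R" and d0: "d0 \<in> {0,1}" using xd(1) unfolding xdd VSL_def by auto
    have sw: "supported (VSL R) w" using w unfolding eigenspace_def by auto
    define dm where "dm = (\<lambda>y. w (y,0) - w (y,1))"
    define sp where "sp = (\<lambda>y. w (y,0) + w (y,1))"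
    have wout: "w (y,d) = 0" if "y \<notin> VG R" for y d
    proof -
      have "(y,d) \<notin> VSL R" unfolding VSL_def using that by auto
      thus ?thesis using sw unfolding supported_def by blast
    qed
    have sdm: "supported (VG R) dm" "supported (VG R) sp" using wout unfolding supported_def dm_def sp_def by auto
    show ?thesis
    proof (cases "\<exists>x\<in>VG R. dm x \<noteq> 0")
      case True
      have "dm \<in> eigenspace (VG R) (AG A0 S E) \<mu>"
        unfolding eigenspace_def using sdm(1) eig_decomp(1)[OF w] unfolding dm_def by auto
      hence "has_eigenvalue (VG R) (AG A0 S E) \<mu>" using True unfolding has_eigenvalue_def by blast
      thus ?thesis using gate_graph unfolding min_eigenvalue_def by blast
    next
      case False
      hence "w (x0,1) = w (x0,0)" using x0 unfolding dm_def by auto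
      hence "sp x0 \<noteq> 0" using xd(2) d0 unfolding xdd sp_def by auto
      hence "nrm (VG R) sp \<noteq> 0" using nrm_zero[OF finite_VG] x0 by blast
      hence pos: "nrm (VG R) sp > 0" using nrm_nonneg[of "VG R" sp] by simp
      have "Re (qform (VG R) (AG A0 S E) sp) = \<mu> * nrm (VG R) sp - 2 * nN R S E sp"
        by (rule qform_eq_pen) (unfold sp_def, intro ballI, rule eig_decomp(2)[OF w])
      hence "e1 * nrm (VG R) sp \<le> \<mu> * nrm (VG R) sp"
        using VPG[OF sdm(2)] nN_nonneg[of R S E sp] by linarith
      thus ?thesis using pos by simp
    qed
  qed
  have hev: "has_eigenvalue (VSL R) (ASL A0 R S E) e1"
  proof -
    obtain \<alpha> x where \<alpha>: "\<alpha> \<in> eigenspace (VG R) (AG A0 S E) e1" and x: "x \<in> VG R" "\<alpha> x \<noteq> 0"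
      using gate_graph unfolding min_eigenvalue_def has_eigenvalue_def by blast
    have "(x,0) \<in> VSL R" using x unfolding VSL_def by auto
    moreover have "tensor_pm (-1) \<alpha> (x,0) \<noteq> 0" using x(2) s2 unfolding tp by simp
    ultimately show ?thesis unfolding has_eigenvalue_def using minus_in[OF \<alpha>] by blast
  qed
  have sub: "w \<in> {tensor_pm (-1) \<alpha> | \<alpha>. \<alpha> \<in> eigenspace (VG R) (AG A0 S E) e1}"
    if w: "w \<in> eigenspace (VSL R) (ASL A0 R S E) e1" for w
  proof -
    have sw: "supported (VSL R) w" using w unfolding eigenspace_def by auto
    define dm where "dm = (\<lambda>y. w (y,0) - w (y,1))"
    define sp where "sp = (\<lambda>y. w (y,0) + w (y,1))"
    have wout: "w (y,d) = 0" if "y \<notin> VG R" for y d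
    proof -
      have "(y,d) \<notin> VSL R" unfolding VSL_def using that by auto
      thus ?thesis using sw unfolding supported_def by blast
    qed
    have wout2: "w (y,d) = 0" if "d \<notin> {0,1}" for y d
    proof -
      have "(y,d) \<notin> VSL R" unfolding VSL_def using that by auto
      thus ?thesis using sw unfolding supported_def by blast
    qed
    have sdm: "supported (VG R) dm" "supported (VG R) sp" using wout unfolding supported_def dm_def sp_def by auto
    have e2: "\<forall>x\<in>VG R. mvec (VG R) (AG A0 S E) sp x + (if x \<in> Nset R S E then 2 * sp x else 0) = complex_of_real e1 * sp x"
      unfolding sp_def by (intro ballI, rule eig_decomp(2)[OF w])
    have "Re (qform (VG R) (AG A0 S E) sp) = e1 * nrm (VG R) sp - 2 * nN R S E sp"
      by (rule qform_eq_pen[OF e2])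
    hence "nN R S E sp = 0" using VPG[OF sdm(2)] nN_nonneg[of R S E sp] by linarith
    hence spN: "sp x = 0" if "x \<in> Nset R S E" for x using nN_zero that by blast
    have "\<forall>x\<in>VG R. mvec (VG R) (AG A0 S E) sp x = complex_of_real e1 * sp x"
    proof
      fix x assume x: "x \<in> VG R"
      show "mvec (VG R) (AG A0 S E) sp x = complex_of_real e1 * sp x"
        using e2 x spN[of x] by (cases "x \<in> Nset R S E") auto
    qed
    hence "sp \<in> eigenspace (VG R) (AG A0 S E) e1"
      unfolding eigenspace_def using sdm(2) by blast
    hence "nrm (VG R) sp \<le> 8 * nN R S E sp" by (rule keybound[OF g0 diagram])
    hence "nrm (VG R) sp = 0" using \<open>nN R S E sp = 0\<close> nrm_nonneg[of "VG R" sp] by simp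
    hence sp0: "w (x,1) = - w (x,0)" if "x \<in> VG R" for x
    proof -
      have "sp x = 0" using nrm_zero[OF finite_VG \<open>nrm (VG R) sp = 0\<close> that] .
      thus ?thesis unfolding sp_def by (simp add: add_eq_0_iff)
    qed
    define \<alpha> where "\<alpha> = (\<lambda>y. (1/s2) * dm y)"
    have "\<alpha> \<in> eigenspace (VG R) (AG A0 S E) e1"
      unfolding eigenspace_def
    proof (intro CollectI conjI ballI)
      show "supported (VG R) \<alpha>" using sdm(1) unfolding supported_def \<alpha>_def by simp
      fix x assume x: "x \<in> VG R"
      show "mvec (VG R) (AG A0 S E) \<alpha> x = complex_of_real e1 * \<alpha> x"
        unfolding \<alpha>_def mvec_scale using eig_decomp(1)[OF w x] unfolding dm_def by simp
    qed
    moreover have "w = tensor_pm (-1) \<alpha>"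
    proof (rule ext)
      fix xd :: "vert \<times> nat" obtain x d where xdd: "xd = (x,d)" by (cases xd)
      show "w xd = tensor_pm (-1) \<alpha> xd"
      proof (cases "x \<in> VG R \<and> d \<in> {0,1}")
        case True
        hence x: "x \<in> VG R" and d: "d = 0 \<or> d = 1" by auto
        have "\<alpha> x = (1/s2) * (2 * w (x,0))" unfolding \<alpha>_def dm_def using sp0[OF x] by simp
        also have "\<dots> = (1/s2) * (s2 * s2 * w (x,0))" using s2(1) by simp
        also have "\<dots> = s2 * w (x,0)" using s2(3) by simp
        finally have ax: "\<alpha> x = s2 * w (x,0)" .
        show ?thesis unfolding xdd tp ax using d s2 sp0[OF x] by (auto simp: field_simps)
      next
        case False
        show ?thesis
        proof (cases "x \<in> VG R")
          case True hence "d \<notin> {0,1}" using False by auto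
          thus ?thesis unfolding xdd tp using wout2 by auto
        next
          case nx: False
          have "w (x,0) = 0" "w (x,1) = 0" "w (x,d) = 0" using wout[OF nx] by auto
          thus ?thesis unfolding xdd tp \<alpha>_def dm_def by simp
        qed
      qed
    qed
    ultimately show ?thesis by blast
  qed
  have claim3: "1/4 \<le> Re (qform (VSL R) (penalty R S E) v)"
    if v: "v \<in> {tensor_pm 1 \<alpha> | \<alpha>. \<alpha> \<in> eigenspace (VG R) (AG A0 S E) e1}" and n1: "cinner (VSL R) v v = 1" for v
  proof -
    obtain \<alpha> where \<alpha>: "\<alpha> \<in> eigenspace (VG R) (AG A0 S E) e1" and vv: "v = tensor_pm 1 \<alpha>" using v by blast
    have v0: "v (x,0) = \<alpha> x / s2" "v (x,1) = \<alpha> x / s2" for x unfolding vv tp by auto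
    have "cinner (VSL R) v v = (\<Sum>x\<in>VG R. cnj (\<alpha> x) * \<alpha> x * (2 / (s2 * s2)))"
      unfolding cinner_def sum_VSL v0 using s2 by (intro sum.cong refl) (simp add: field_simps)
    also have "\<dots> = cinner (VG R) \<alpha> \<alpha>" unfolding s2 cinner_def by simp
    finally have "nrm (VG R) \<alpha> = 1" using n1 unfolding cinner_self by simp
    have "qform (VSL R) (penalty R S E) v = (\<Sum>x\<in>VG R. if x \<in> Nset R S E then 2 * (cnj (\<alpha> x) * \<alpha> x) else 0)"
      unfolding qform_def cinner_def sum_VSL
    proof (intro sum.cong refl)
      fix x assume x: "x \<in> VG R"
      show "cnj (v (x,0)) * mvec (VSL R) (penalty R S E) v (x,0) + cnj (v (x,1)) * mvec (VSL R) (penalty R S E) v (x,1)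
         = (if x \<in> Nset R S E then 2 * (cnj (\<alpha> x) * \<alpha> x) else 0)"
        unfolding penalty_mvec[OF x] v0 using s2 by (auto simp: field_simps)
    qed
    also have "\<dots> = 2 * complex_of_real (nN R S E \<alpha>)"
    proof -
      have "complex_of_real (nN R S E \<alpha>) = (\<Sum>x\<in>VG R. if x \<in> Nset R S E then cnj (\<alpha> x) * \<alpha> x else 0)"
        unfolding nN_def of_real_sum by (intro sum.cong refl, simp only: cn[symmetric] of_real_0 split: if_split, blast)
      moreover have "(\<Sum>x\<in>VG R. if x \<in> Nset R S E then 2 * (cnj (\<alpha> x) * \<alpha> x) else 0)
          = 2 * (\<Sum>x\<in>VG R. if x \<in> Nset R S E then cnj (\<alpha> x) * \<alpha> x else 0)"
        unfolding sum_distrib_left by (intro sum.cong refl) simp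
      ultimately show ?thesis by simp
    qed
    finally have "Re (qform (VSL R) (penalty R S E) v) = 2 * nN R S E \<alpha>" by simp
    moreover have "nrm (VG R) \<alpha> \<le> 8 * nN R S E \<alpha>" by (rule keybound[OF g0 diagram \<alpha>])
    ultimately show ?thesis using \<open>nrm (VG R) \<alpha> = 1\<close> by simp
  qed
  show ?thesis
  proof (intro conjI)
    show "min_eigenvalue (VSL R) (ASL A0 R S E) e1" unfolding min_eigenvalue_def using hev ev_ge by blast
    show "eigenspace (VSL R) (ASL A0 R S E) e1 = {tensor_pm (-1) \<alpha> | \<alpha>. \<alpha> \<in> eigenspace (VG R) (AG A0 S E) e1}"
      using sub minus_in by blast
    show "\<forall>v \<in> {tensor_pm 1 \<alpha> | \<alpha>. \<alpha> \<in> eigenspace (VG R) (AG A0 S E) e1}.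
           cinner (VSL R) v v = 1 \<longrightarrow> 1/4 \<le> Re (qform (VSL R) (penalty R S E) v)"
      using claim3 by blast
  qed
qed


end
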